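(* For every $n \ge 1$, the $\mathbb{Z}$-discriminating complexity of $\mathbb{Z}^n$ asymptotically dominates a polynomial of degree $n-1$, i.e. $(R \mapsto R^{n-1}) \preceq C_{\mathbb{Z}^n}^{\mathbb{Z}}$.
   Context: A homomorphism $\phi: G \to H$ discriminates a finite set $S\subseteq G-\{1\}$ if $1\notin\phi(S)$. For finite generating sets $X$ of $G$, $Y$ of $H$, $|\phi|_X^Y := \max_{x\in X}|\phi(x)|_Y$, and $C_{G,X}^{H,Y}(R) := \min\{|\phi|_X^Y : \phi \text{ discriminates } B_R(G,X)-\{1\}\}$, with $B_R(G,X)$ the closed word-metric ball of radius $R$. For $f,g:\mathbb{N}\to\mathbb{N}$, $f\preceq g$ means there is $K$ with $f(R)\le Kg(KR)+K$ for all $R$; the $\preceq$-class of $C_{G,X}^{H,Y}$ is independent of $X,Y$ and denoted $C_G^H$. *)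

theory Defs
  imports "HOL-Analysis.Finite_Cartesian_Product"
begin

definition word_len :: "'a::ab_group_add set \<Rightarrow> 'a \<Rightarrow> nat" where
  "word_len X g = (LEAST k. \<exists>xs. length xs = k \<and> set xs \<subseteq> X \<union> uminus ` X \<and> sum_list xs = g)"

definition word_ball :: "'a::ab_group_add set \<Rightarrow> nat \<Rightarrow> 'a set" where
  "word_ball X R = {g. word_len X g \<le> R}"

definition is_hom :: "('a::ab_group_add \<Rightarrow> 'b::ab_group_add) \<Rightarrow> bool" where
  "is_hom \<phi> \<longleftrightarrow> (\<forall>x y. \<phi> (x + y) = \<phi> x + \<phi> y)"

definition discriminates :: "('a \<Rightarrow> 'b::zero) \<Rightarrow> 'a set \<Rightarrow> bool" where
  "discriminates \<phi> S \<longleftrightarrow> 0 \<notin> \<phi> ` S"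

definition hom_size :: "'a::ab_group_add set \<Rightarrow> 'b::ab_group_add set \<Rightarrow> ('a \<Rightarrow> 'b) \<Rightarrow> nat" where
  "hom_size X Y \<phi> = Max ((\<lambda>x. word_len Y (\<phi> x)) ` X)"

definition disc_complexity ::
  "'a::ab_group_add set \<Rightarrow> 'b::ab_group_add set \<Rightarrow> nat \<Rightarrow> nat" where
  "disc_complexity X Y R = (LEAST c. \<exists>\<phi>::'a \<Rightarrow> 'b. is_hom \<phi> \<and>
       discriminates \<phi> (word_ball X R - {0}) \<and> hom_size X Y \<phi> = c)"

definition preceq :: "(nat \<Rightarrow> nat) \<Rightarrow> (nat \<Rightarrow> nat) \<Rightarrow> bool" (infix "\<preceq>" 50) where
  "f \<preceq> g \<longleftrightarrow> (\<exists>K. \<forall>R. f R \<le> K * g (K * R) + K)"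

definition std_basis :: "(int ^ 'n) set" where
  "std_basis = (\<lambda>i. \<chi> j. if j = i then 1 else 0) ` UNIV"

end

theory Submission imports Defs "HOL-Library.FuncSet" begin

lemma wl_exI: assumes "length xs = k" "set xs \<subseteq> X \<union> uminus ` X" "sum_list xs = g"
  shows "word_len X g \<le> k" and "\<exists>ys. length ys = word_len X g \<and> set ys \<subseteq> X \<union> uminus ` X \<and> sum_list ys = g"
proof -
  have P: "\<exists>xs. length xs = k \<and> set xs \<subseteq> X \<union> uminus ` X \<and> sum_list xs = g" using assms by blast
  show "word_len X g \<le> k" unfolding word_len_def by (rule Least_le) (use P in blast)
  show "\<exists>ys. length ys = word_len X g \<and> set ys \<subseteq> X \<union> uminus ` X \<and> sum_list ys = g"
    unfolding word_len_def by (rule LeastI) (use P in blast)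
qed

lemma sum_list_abs1: "set xs \<subseteq> {1::int} \<union> uminus ` {1} \<Longrightarrow> \<bar>sum_list xs\<bar> \<le> int (length xs)"
  by (induction xs) auto

lemma wl1_ge: "\<bar>a\<bar> \<le> int (word_len {1::int} a)"
proof -
  have "length (replicate (nat \<bar>a\<bar>) (sgn a)) = nat \<bar>a\<bar>" by simp
  moreover have "set (replicate (nat \<bar>a\<bar>) (sgn a)) \<subseteq> {1} \<union> uminus ` {1}"
    by (cases "a = 0") (auto simp: sgn_if)
  moreover have "sum_list (replicate (nat \<bar>a\<bar>) (sgn a)) = a"
    by (simp add: sum_list_replicate abs_mult_sgn)
  ultimately obtain ys where "length ys = word_len {1} a" "set ys \<subseteq> {1} \<union> uminus ` {1}" "sum_list ys = a"
    using wl_exI(2) by blast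
  then show ?thesis using sum_list_abs1[of ys] by simp
qed

definition ev :: "'n \<Rightarrow> int ^ 'n" where "ev i = (\<chi> j. if j = i then 1 else 0)"

lemma std_basis_ev: "std_basis = range ev"
  unfolding std_basis_def ev_def by simp

lemma sum_list_comp: "(sum_list (xs :: (int^'n) list)) $ j = sum_list (map (\<lambda>x. x $ j) xs)"
  by (induction xs) auto

lemma comp_bound: "set xs \<subseteq> std_basis \<union> uminus ` std_basis \<Longrightarrow> \<bar>(sum_list (xs :: (int^'n) list)) $ j\<bar> \<le> int (length xs)"
proof (induction xs)
  case Nil then show ?case by simp
next
  case (Cons x xs)
  have "\<bar>x $ j\<bar> \<le> 1" using Cons.prems by (auto simp: std_basis_ev ev_def)
  then show ?case using Cons by (simp add: abs_triangle_ineq order_trans[OF abs_triangle_ineq])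
qed

lemma list_exists: "\<forall>v::int^'n. (\<Sum>j\<in>UNIV. nat \<bar>v $ j\<bar>) = N \<longrightarrow>
   (\<exists>xs. length xs = N \<and> set xs \<subseteq> std_basis \<union> uminus ` std_basis \<and> sum_list xs = v)"
proof (induction N)
  case 0
  then show ?case by (auto simp: vec_eq_iff)
next
  case (Suc N)
  show ?case
  proof (intro allI impI)
    fix v :: "int^'n" assume h: "(\<Sum>j\<in>UNIV. nat \<bar>v $ j\<bar>) = Suc N"
    have "\<exists>i. v $ i \<noteq> 0"
    proof (rule ccontr)
      assume "\<not> (\<exists>i. v $ i \<noteq> 0)"
      then have "\<forall>i. v $ i = 0" by blast
      then show False using h by simp
    qed
    then obtain i where i: "v $ i \<noteq> 0" by blast
    define w :: "int^'n" where "w = (\<chi> j. if j = i then sgn (v$i) else 0)"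
    define v' where "v' = v - w"
    have wS: "w \<in> std_basis \<union> uminus ` std_basis"
      using i by (cases "v$i > 0") (auto simp: w_def std_basis_ev ev_def sgn_if image_iff vec_eq_iff)
    have c: "nat \<bar>v' $ j\<bar> = (if j = i then nat \<bar>v$j\<bar> - 1 else nat \<bar>v$j\<bar>)" for j
      using i by (auto simp: v'_def w_def sgn_if)
    have "(\<Sum>j\<in>UNIV. nat \<bar>v $ j\<bar>) = nat \<bar>v $ i\<bar> + (\<Sum>j\<in>UNIV-{i}. nat \<bar>v $ j\<bar>)"
      by (simp add: sum.remove)
    moreover have "(\<Sum>j\<in>UNIV. nat \<bar>v' $ j\<bar>) = nat \<bar>v' $ i\<bar> + (\<Sum>j\<in>UNIV-{i}. nat \<bar>v' $ j\<bar>)"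
      by (simp add: sum.remove)
    moreover have "(\<Sum>j\<in>UNIV-{i}. nat \<bar>v' $ j\<bar>) = (\<Sum>j\<in>UNIV-{i}. nat \<bar>v $ j\<bar>)"
      by (rule sum.cong) (auto simp: c)
    moreover have "nat \<bar>v $ i\<bar> \<ge> 1" using i by simp
    ultimately have "(\<Sum>j\<in>UNIV. nat \<bar>v' $ j\<bar>) = N" using h c[of i] by simp linarith
    then obtain xs where xs: "length xs = N" "set xs \<subseteq> std_basis \<union> uminus ` std_basis" "sum_list xs = v'"
      using Suc.IH by blast
    show "\<exists>xs. length xs = Suc N \<and> set xs \<subseteq> std_basis \<union> uminus ` std_basis \<and> sum_list xs = v"
      by (rule exI[of _ "w # xs"]) (use xs wS in \<open>auto simp: v'_def\<close>)
  qed
qed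

lemma wl_le: "word_len std_basis (v::int^'n) \<le> (\<Sum>j\<in>UNIV. nat \<bar>v $ j\<bar>)"
  using list_exists wl_exI(1) by blast

lemma wl_comp: "\<bar>(v::int^'n) $ j\<bar> \<le> int (word_len std_basis v)"
proof -
  obtain xs where "length xs = (\<Sum>j\<in>UNIV. nat \<bar>v $ j\<bar>)" "set xs \<subseteq> std_basis \<union> uminus ` std_basis" "sum_list xs = v"
    using list_exists by blast
  then obtain ys where "length ys = word_len std_basis v" "set ys \<subseteq> std_basis \<union> uminus ` std_basis" "sum_list ys = v"
    using wl_exI(2) by blast
  then show ?thesis using comp_bound[of ys j] by simp
qed

definition sc :: "int \<Rightarrow> int^'n \<Rightarrow> int^'n" where "sc k x = (\<chi> j. k * x $ j)"

lemma hom0: "is_hom (\<phi> :: int^'n \<Rightarrow> int) \<Longrightarrow> \<phi> 0 = 0"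
proof -
  assume h: "is_hom \<phi>"
  have "\<phi> (0 + 0) = \<phi> 0 + \<phi> 0" using h unfolding is_hom_def by blast
  then show ?thesis by simp
qed

lemma homneg: "is_hom (\<phi> :: int^'n \<Rightarrow> int) \<Longrightarrow> \<phi> (- x) = - \<phi> x"
proof -
  assume h: "is_hom \<phi>"
  have "\<phi> (x + - x) = \<phi> x + \<phi> (- x)" using h unfolding is_hom_def by blast
  then show ?thesis using hom0[OF h] by simp
qed

lemma homdiff: "is_hom (\<phi> :: int^'n \<Rightarrow> int) \<Longrightarrow> \<phi> (x - y) = \<phi> x - \<phi> y"
proof -
  assume h: "is_hom \<phi>"
  have "\<phi> (x + - y) = \<phi> x + \<phi> (- y)" using h unfolding is_hom_def by blast
  then show ?thesis using homneg[OF h, of y] by simp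
qed

lemma homsum: assumes h: "is_hom (\<phi> :: int^'n \<Rightarrow> int)" and f: "finite A" shows "\<phi> (sum g A) = (\<Sum>a\<in>A. \<phi> (g a))"
  using f by (induction A rule: finite_induct) (use h in \<open>auto simp: hom0[OF h] is_hom_def\<close>)

lemma homsc_nat: "is_hom (\<phi> :: int^'n \<Rightarrow> int) \<Longrightarrow> \<phi> (sc (int n) x) = int n * \<phi> x"
proof (induction n)
  case 0
  have "sc 0 x = 0" by (simp add: sc_def vec_eq_iff)
  then show ?case using hom0[OF 0] by simp
next
  case (Suc n)
  have "sc (int (Suc n)) x = x + sc (int n) x" by (simp add: sc_def vec_eq_iff algebra_simps)
  then show ?case using Suc by (simp add: is_hom_def algebra_simps)
qed

lemma homsc: assumes h: "is_hom (\<phi> :: int^'n \<Rightarrow> int)" shows "\<phi> (sc k x) = k * \<phi> x"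
proof (cases k rule: int_cases)
  case (nonneg n) then show ?thesis using homsc_nat[OF h] by blast
next
  case (neg n)
  have e: "sc k x = - sc (int (Suc n)) x" by (simp only: neg sc_def) (simp add: vec_eq_iff algebra_simps)
  have "\<phi> (sc k x) = - (int (Suc n) * \<phi> x)" unfolding e homneg[OF h] homsc_nat[OF h] ..
  also have "\<dots> = k * \<phi> x" by (simp only: neg mult_minus_left)
  finally show ?thesis .
qed

lemma hom_lin: "is_hom (\<phi> :: int^'n \<Rightarrow> int) \<Longrightarrow> \<phi> v = (\<Sum>i\<in>UNIV. v $ i * \<phi> (ev i))"
proof -
  assume h: "is_hom \<phi>"
  have "v = (\<Sum>i\<in>UNIV. sc (v $ i) (ev i))"
  proof -
    have "(\<Sum>x\<in>UNIV. v $ x * (if i = x then 1 else 0)) = v $ i" for i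
    proof -
      have "(\<Sum>x\<in>UNIV. v $ x * (if i = x then 1 else 0)) = (\<Sum>x\<in>UNIV. if i = x then v $ x else 0)"
        by (rule sum.cong) auto
      then show ?thesis by simp
    qed
    then show ?thesis by (simp add: vec_eq_iff sc_def ev_def)
  qed
  then have "\<phi> v = \<phi> (\<Sum>i\<in>UNIV. sc (v $ i) (ev i))" by (rule arg_cong[where f=\<phi>])
  also have "\<dots> = (\<Sum>i\<in>UNIV. \<phi> (sc (v $ i) (ev i)))" by (rule homsum[OF h]) simp
  finally have "\<phi> v = (\<Sum>i\<in>UNIV. \<phi> (sc (v $ i) (ev i)))" .
  then show ?thesis using homsc[OF h] by simp
qed

lemma pigeon:
  fixes \<phi> :: "int^'n \<Rightarrow> int"
  assumes h: "is_hom \<phi>" and d: "discriminates \<phi> (word_ball std_basis (CARD('n) * m) - {0})"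
    and M: "\<And>i. \<bar>\<phi> (ev i)\<bar> \<le> int M"
  shows "(m+1) ^ CARD('n) \<le> 2 * CARD('n) * m * M + 1"
proof -
  define N where "N = CARD('n)"
  define S where "S = vec_lambda ` (PiE UNIV (\<lambda>_::'n. {0..int m}))"
  have cS: "card S = (m+1) ^ N"
  proof -
    have "inj_on vec_lambda (PiE UNIV (\<lambda>_::'n. {0..int m}))"
      by (auto simp: inj_on_def)
    then have "card S = card (PiE UNIV (\<lambda>_::'n. {0..int m}))" unfolding S_def by (rule card_image)
    also have "\<dots> = (m+1) ^ N"
    proof -
      have "nat (int m + 1) = m + 1" by arith
      then show ?thesis by (simp add: card_PiE N_def)
    qed
    finally show ?thesis .
  qed
  have Sc: "v \<in> S \<Longrightarrow> 0 \<le> v $ i \<and> v $ i \<le> int m" for v i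
    unfolding S_def by (auto simp: PiE_def)
  have inj: "inj_on \<phi> S"
  proof (rule inj_onI, rule ccontr)
    fix v v' assume v: "v \<in> S" "v' \<in> S" "\<phi> v = \<phi> v'" "v \<noteq> v'"
    define w where "w = v - v'"
    have w0: "w \<noteq> 0" using v unfolding w_def by simp
    have pw: "\<phi> w = 0" using v homdiff[OF h] unfolding w_def by simp
    have "\<bar>w $ j\<bar> \<le> int m" for j using Sc[OF v(1), of j] Sc[OF v(2), of j] unfolding w_def by simp arith
    then have "nat \<bar>w $ j\<bar> \<le> m" for j by (simp add: nat_le_iff)
    then have "(\<Sum>j\<in>UNIV. nat \<bar>w $ j\<bar>) \<le> (\<Sum>j\<in>(UNIV::'n set). m)" by (intro sum_mono) auto
    then have "word_len std_basis w \<le> N * m" using wl_le[of w] by (simp add: N_def)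
    then have "w \<in> word_ball std_basis (N*m) - {0}" using w0 by (simp add: word_ball_def)
    then have "0 \<in> \<phi> ` (word_ball std_basis (N*m) - {0})" using pw by (metis image_eqI)
    then show False using d unfolding discriminates_def N_def by simp
  qed
  have img: "\<phi> ` S \<subseteq> {-(int (N*m*M))..int (N*m*M)}"
  proof
    fix y assume "y \<in> \<phi> ` S"
    then obtain v where v: "v \<in> S" "y = \<phi> v" by blast
    have "\<phi> v = (\<Sum>i\<in>UNIV. v $ i * \<phi> (ev i))" by (rule hom_lin[OF h])
    then have "\<bar>\<phi> v\<bar> = \<bar>\<Sum>i\<in>UNIV. v $ i * \<phi> (ev i)\<bar>" by (rule arg_cong)
    also have "\<dots> \<le> (\<Sum>i\<in>UNIV. \<bar>v $ i * \<phi> (ev i)\<bar>)" by (rule sum_abs)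
    also have "\<dots> \<le> (\<Sum>i\<in>(UNIV::'n set). int m * int M)"
    proof (rule sum_mono)
      fix i
      have "\<bar>v $ i\<bar> \<le> int m" using Sc[OF v(1), of i] by simp
      moreover have "\<bar>\<phi> (ev i)\<bar> \<le> int M" by (rule M)
      ultimately have "\<bar>v $ i\<bar> * \<bar>\<phi> (ev i)\<bar> \<le> int m * int M" by (intro mult_mono) auto
      then show "\<bar>v $ i * \<phi> (ev i)\<bar> \<le> int m * int M"
        by (simp add: abs_mult)
    qed
    also have "\<dots> = int (N*m*M)" by (simp add: N_def)
    finally show "y \<in> {-(int (N*m*M))..int (N*m*M)}" using v by auto
  qed
  have "card S = card (\<phi> ` S)" using inj by (simp add: card_image)
  also have "\<dots> \<le> card {-(int (N*m*M))..int (N*m*M)}" by (rule card_mono) (use img in auto)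
  also have "\<dots> = 2 * N * m * M + 1"
  proof -
    have "card {-(int a)..int a} = 2*a+1" for a :: nat by simp
    from this[of "N*m*M"] show ?thesis by (simp only: mult.assoc)
  qed
  finally show ?thesis using cS N_def by simp
qed

lemma base_lemma:
  fixes B :: int
  shows "\<forall>u. (\<forall>k<n. \<bar>u k\<bar> < B) \<longrightarrow> (\<Sum>k<n. u k * B ^ k) = 0 \<longrightarrow> (\<forall>k<n. u k = 0)"
proof (induction n)
  case 0 then show ?case by simp
next
  case (Suc n)
  show ?case
  proof (intro allI impI)
    fix u :: "nat \<Rightarrow> int" and k
    assume b: "\<forall>k<Suc n. \<bar>u k\<bar> < B" and s: "(\<Sum>k<Suc n. u k * B ^ k) = 0" and k: "k < Suc n"
    define T where "T = (\<Sum>k<n. u (Suc k) * B ^ k)"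
    have "(\<Sum>k<Suc n. u k * B ^ k) = u 0 + (\<Sum>k<n. u (Suc k) * B ^ Suc k)"
      by (subst sum.lessThan_Suc_shift) simp
    also have "(\<Sum>k<n. u (Suc k) * B ^ Suc k) = B * T"
      unfolding T_def by (simp add: sum_distrib_left algebra_simps)
    finally have e: "u 0 + B * T = 0" using s by simp
    have "\<bar>u 0\<bar> < B" using b by simp
    then have B0: "B > 0" by linarith
    have "T = 0"
    proof (rule ccontr)
      assume "T \<noteq> 0"
      then have t1: "\<bar>T\<bar> \<ge> 1" by linarith
      have "B * 1 \<le> B * \<bar>T\<bar>" using t1 B0 by (intro mult_left_mono) auto
      then have "\<bar>B * T\<bar> \<ge> B" using B0 by (simp add: abs_mult)
      moreover have "\<bar>u 0\<bar> < B" using b by simp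
      moreover have "u 0 = - (B * T)" using e by (simp add: eq_neg_iff_add_eq_0)
      ultimately show False by simp
    qed
    then have u0: "u 0 = 0" using e by simp
    have "\<forall>k<n. u (Suc k) = 0" using Suc.IH[rule_format, of "\<lambda>k. u (Suc k)"] b \<open>T = 0\<close> unfolding T_def by simp
    then show "u k = 0" using u0 k by (cases k) auto
  qed
qed
lemma exists_disc: "\<exists>\<phi>::int^'n \<Rightarrow> int. is_hom \<phi> \<and> discriminates \<phi> (word_ball std_basis R - {0})"
proof -
  obtain f :: "'n \<Rightarrow> nat" where f: "bij_betw f UNIV {0..<CARD('n)}"
    using ex_bij_betw_finite_nat[of "UNIV :: 'n set"] by auto
  define B :: int where "B = int R + 1"
  define \<phi> where "\<phi> v = (\<Sum>i\<in>UNIV. v $ i * B ^ f i)" for v :: "int^'n"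
  have h: "is_hom \<phi>" unfolding is_hom_def \<phi>_def by (simp add: sum.distrib distrib_right)
  have "discriminates \<phi> (word_ball std_basis R - {0})"
    unfolding discriminates_def
  proof
    assume "0 \<in> \<phi> ` (word_ball std_basis R - {0})"
    then obtain v where v0: "v \<in> word_ball std_basis R - {0}" "\<phi> v = 0"
      by (metis (no_types, lifting) imageE)
    then have v: "word_len std_basis v \<le> R" "v \<noteq> 0" "\<phi> v = 0"
      by (auto simp: word_ball_def)
    have vb: "\<bar>v $ i\<bar> < B" for i using wl_comp[of v i] v(1) unfolding B_def by linarith
    define g where "g = inv_into UNIV f"
    have gb: "bij_betw g {0..<CARD('n)} UNIV" unfolding g_def using f by (rule bij_betw_inv_into)
    have "(\<Sum>k\<in>{0..<CARD('n)}. v $ (g k) * B ^ f (g k)) = (\<Sum>i\<in>UNIV. v $ i * B ^ f i)"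
      by (rule sum.reindex_bij_betw[OF gb])
    moreover have "f (g k) = k" if "k \<in> {0..<CARD('n)}" for k
      unfolding g_def using f that by (simp add: bij_betw_inv_into_right)
    ultimately have "(\<Sum>k<CARD('n). v $ (g k) * B ^ k) = 0"
      using v(3) unfolding \<phi>_def by (simp add: atLeast0LessThan)
    moreover have "\<forall>k<CARD('n). \<bar>v $ (g k)\<bar> < B" using vb by blast
    ultimately have z: "\<forall>k<CARD('n). v $ (g k) = 0"
      using base_lemma[of "CARD('n)" B, rule_format, of "\<lambda>k. v $ (g k)"] by blast
    have "v $ i = 0" for i
    proof -
      have "f i < CARD('n)" using f by (auto simp: bij_betw_def)
      moreover have "g (f i) = i" unfolding g_def using f by (simp add: bij_betw_def)
      ultimately have "v $ (g (f i)) = 0" using z by blast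
      then show ?thesis using \<open>g (f i) = i\<close> by simp
    qed
    then show False using v(2) by (simp add: vec_eq_iff)
  qed
  then show ?thesis using h by blast
qed

lemma hom_size_ge: "\<bar>\<phi> (ev i)\<bar> \<le> int (hom_size std_basis {1::int} (\<phi> :: int^'n \<Rightarrow> int))"
proof -
  have "word_len {1} (\<phi> (ev i)) \<le> hom_size std_basis {1} \<phi>"
    unfolding hom_size_def by (rule Max_ge) (auto simp: std_basis_ev)
  then show ?thesis using wl1_ge[of "\<phi> (ev i)"] by linarith
qed

lemma pw_le: "(m::nat) ^ Suc k + 1 \<le> (m+1) ^ Suc k"
proof (induction k)
  case 0 then show ?case by simp
next
  case (Suc k)
  have "(m+1) * (m ^ Suc k + 1) \<le> (m+1) * (m+1) ^ Suc k" by (rule mult_le_mono2) (rule Suc.IH)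
  moreover have "m ^ Suc (Suc k) + 1 \<le> (m+1) * (m ^ Suc k + 1)" by (simp add: algebra_simps)
  ultimately show ?case by (metis order_trans power_Suc)
qed

lemma bound:
  assumes m: "m \<ge> 1"
  shows "m ^ (CARD('n) - 1) \<le> 2 * CARD('n) * disc_complexity (std_basis :: (int ^ 'n) set) ({1} :: int set) (CARD('n) * m)"
proof -
  define N where "N = CARD('n)"
  define C where "C = disc_complexity (std_basis :: (int ^ 'n) set) ({1} :: int set) (N * m)"
  define P where "P c = (\<exists>\<phi>::int^'n \<Rightarrow> int. is_hom \<phi> \<and> discriminates \<phi> (word_ball std_basis (N*m) - {0}) \<and> hom_size std_basis {1::int} \<phi> = c)" for c
  have ex: "\<exists>c. P c" unfolding P_def using exists_disc by blast
  have "P (LEAST c. P c)" using ex by (rule LeastI_ex)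
  moreover have "C = (LEAST c. P c)" unfolding C_def disc_complexity_def P_def ..
  ultimately have "P C" by simp
  then obtain \<phi> :: "int^'n \<Rightarrow> int" where p: "is_hom \<phi>" "discriminates \<phi> (word_ball std_basis (N*m) - {0})"
     "hom_size std_basis {1::int} \<phi> = C"
    unfolding P_def by blast
  have "(m+1) ^ N \<le> 2 * N * m * C + 1"
    using pigeon[OF p(1), of m C] p hom_size_ge[of \<phi>] unfolding N_def by simp
  moreover have N1: "N \<ge> 1" unfolding N_def by (simp add: Suc_leI)
  moreover have "m ^ N + 1 \<le> (m+1) ^ N"
  proof -
    obtain N' where "N = Suc N'" using N1 by (cases N) auto
    then show ?thesis using pw_le[of m N'] by simp
  qed
  ultimately have "m ^ N \<le> 2 * N * m * C" by linarith
  moreover have "m ^ N = m * m ^ (N - 1)"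
  proof -
    obtain N' where "N = Suc N'" using N1 by (cases N) auto
    then show ?thesis by simp
  qed
  ultimately have "m * m ^ (N - 1) \<le> m * (2 * N * C)" by (simp add: ac_simps)
  then show ?thesis using m unfolding N_def C_def by simp
qed

theorem mainTheorem9:
  shows "(\<lambda>R. R ^ (CARD('n::finite) - 1)) \<preceq>
           disc_complexity (std_basis :: (int ^ 'n) set) ({1} :: int set)"
  unfolding preceq_def
proof (rule exI[of _ "2 * CARD('n)"], intro allI)
  fix R :: nat
  define N where "N = CARD('n)"
  have N1: "N \<ge> 1" unfolding N_def by (simp add: Suc_leI)
  show "R ^ (CARD('n) - 1) \<le> 2 * CARD('n) * disc_complexity (std_basis :: (int ^ 'n) set) ({1} :: int set) (2 * CARD('n) * R) + 2 * CARD('n)"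
  proof (cases "R = 0")
    case True
    have c1: "1 \<le> CARD('n)" by (simp add: Suc_leI)
    have "R ^ (CARD('n) - 1) \<le> 1" using True by (cases "CARD('n) - 1") auto
    then show ?thesis using c1 by linarith
  next
    case False
    have "R ^ (N - 1) \<le> (2*R) ^ (N - 1)" by (intro power_mono) auto
    also have "\<dots> \<le> 2 * N * disc_complexity (std_basis :: (int ^ 'n) set) ({1} :: int set) (N * (2*R))"
      unfolding N_def by (rule bound) (use False in simp)
    finally show ?thesis unfolding N_def by (simp add: ac_simps)
  qed
qed

end
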